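(* For every positive integer $k$, any $\frac19$-tester (adaptive allowed) for convexity of functions $f\colon[3^k]\to[(9k)^{3k}]$ makes $\Omega(k)$ queries.
   Context: $[m]=\{0,\dots,m-1\}$. A function $f\colon X\to\mathbb{R}$ on a finite set $X\subseteq\mathbb{R}$ is convex if for every finite collection $x_1,\dots,x_k\in X$ and reals $\lambda_i\ge0$ with $\sum_i\lambda_i=1$ and $\sum_i\lambda_ix_i\in X$, one has $f(\sum_i\lambda_ix_i)\le\sum_i\lambda_if(x_i)$. $f$ is $\epsilon$-far from convex if every convex $h$ on the same domain differs from $f$ on at least $\epsilon|X|$ points. An $\epsilon$-tester is a randomized query algorithm that accepts convex functions with probability at least $2/3$ and rejects $\epsilon$-far functions with probability at least $2/3$. *)

theory Defs
  imports "HOL-Probability.Probability"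
begin

text \<open>Domain [n] = {0,...,n-1} (as naturals, embedded into the reals).
  A function on [n] is represented as a total function on nat; convexity is
  the paper's definition for a function on a finite subset of the reals.\<close>

definition convex_fin :: "nat set \<Rightarrow> (nat \<Rightarrow> real) \<Rightarrow> bool" where
  "convex_fin D h \<longleftrightarrow>
     (\<forall>(S::nat set) (lam::nat \<Rightarrow> real) m.
        finite S \<and> S \<subseteq> D \<and> (\<forall>x\<in>S. lam x \<ge> 0) \<and> (\<Sum>x\<in>S. lam x) = 1 \<and>
        m \<in> D \<and> (\<Sum>x\<in>S. lam x * real x) = real m
        \<longrightarrow> h m \<le> (\<Sum>x\<in>S. lam x * h x))"

definition far_from_convex :: "real \<Rightarrow> nat set \<Rightarrow> (nat \<Rightarrow> real) \<Rightarrow> bool" where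
  "far_from_convex eps D f \<longleftrightarrow>
     (\<forall>h. convex_fin D h \<longrightarrow> real (card {x\<in>D. f x \<noteq> h x}) \<ge> eps * real (card D))"

text \<open>Adaptive deterministic query algorithms are decision trees: either
  output a verdict, or query a point and continue depending on the answer.\<close>
datatype dtree = Leaf bool | Query nat "nat \<Rightarrow> dtree"

primrec run :: "dtree \<Rightarrow> (nat \<Rightarrow> nat) \<Rightarrow> bool" where
  "run (Leaf b) f = b"
| "run (Query x c) f = run (c (f x)) f"

text \<open>Worst-case number of queries made by a tree on input functions f
  with values in [R] (only answers in [R] can occur).\<close>
primrec queries_le :: "nat \<Rightarrow> dtree \<Rightarrow> nat \<Rightarrow> bool" where
  "queries_le R (Leaf b) = (\<lambda>q. True)"
| "queries_le R (Query x c) = (\<lambda>q. q > 0 \<and> (\<forall>a<R. queries_le R (c a) (q - 1)))"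

definition fun_class :: "nat \<Rightarrow> nat \<Rightarrow> (nat \<Rightarrow> nat) set" where
  "fun_class n R = {f. (\<forall>x<n. f x < R) \<and> (\<forall>x\<ge>n. f x = 0)}"

text \<open>A randomized (adaptive) algorithm is a probability distribution over
  decision trees.\<close>
definition accept_prob :: "dtree pmf \<Rightarrow> (nat \<Rightarrow> nat) \<Rightarrow> real" where
  "accept_prob T f = measure_pmf.prob T {t. run t f}"

definition convexity_tester :: "real \<Rightarrow> nat \<Rightarrow> nat \<Rightarrow> dtree pmf \<Rightarrow> bool" where
  "convexity_tester eps n R T \<longleftrightarrow>
     (\<forall>f\<in>fun_class n R.
        (convex_fin {..<n} (\<lambda>x. real (f x)) \<longrightarrow> accept_prob T f \<ge> 2/3) \<and>
        (far_from_convex eps {..<n} (\<lambda>x. real (f x)) \<longrightarrow> 1 - accept_prob T f \<ge> 2/3))"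

definition makes_at_most :: "nat \<Rightarrow> dtree pmf \<Rightarrow> nat \<Rightarrow> bool" where
  "makes_at_most R T q \<longleftrightarrow> (\<forall>t\<in>set_pmf T. queries_le R t q)"

end

theory Submission
  imports Defs
begin

lemma accept_prob_integral:
  "accept_prob T f = measure_pmf.expectation T (\<lambda>t. if run t f then 1 else 0)"
proof -
  have "(\<lambda>t. if run t f then 1 else 0 :: real) = indicator {t. run t f}"
    by (auto simp: indicator_def)
  then show ?thesis by (simp add: accept_prob_def integral_indicator)
qed

lemma integrable_pmf_bounded:
  fixes f :: "'a \<Rightarrow> real"
  assumes "\<And>t. \<bar>f t\<bar> \<le> B"
  shows "integrable (measure_pmf T) f"
  by (rule measure_pmf.integrable_const_bound[where B=B]) (auto simp: assms measurable_pmf_measure1)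

lemma yao:
  fixes G :: "'s \<Rightarrow> nat \<Rightarrow> nat" and F :: "'i \<Rightarrow> 's \<Rightarrow> nat \<Rightarrow> nat"
  assumes fS: "finite S" and neS: "S \<noteq> {}" and fI: "finite I"
    and yes: "\<And>c. c \<in> S \<Longrightarrow> accept_prob T (G c) \<ge> 2/3"
    and no: "\<And>i c. i \<in> I \<Longrightarrow> c \<in> S \<Longrightarrow> 1 - accept_prob T (F i c) \<ge> 2/3"
    and tree: "\<And>t. t \<in> set_pmf T \<Longrightarrow>
       (\<Sum>i\<in>I. \<Sum>c\<in>S. (if run t (G c) then 1 else 0) - (if run t (F i c) then 1 else 0 :: real))
        \<le> q * real (card S)"
  shows "real (card I) / 3 \<le> q"
proof -
  define X where "X = (\<lambda>t. (\<Sum>i\<in>I. \<Sum>c\<in>S. (if run t (G c) then 1 else 0) - (if run t (F i c) then 1 else 0 :: real)))"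
  have int: "integrable (measure_pmf T) (\<lambda>t. (if run t f then 1 else 0 :: real))" for f
    by (rule integrable_pmf_bounded[where B=1]) auto
  have "(\<Sum>i\<in>I. \<Sum>c\<in>S. accept_prob T (G c) - accept_prob T (F i c)) = measure_pmf.expectation T X"
    unfolding X_def accept_prob_integral
    by (subst Bochner_Integration.integral_sum, use int in auto)+
  also have "\<dots> \<le> q * real (card S)"
  proof (rule measure_pmf.integral_le_const)
    show "integrable (measure_pmf T) X" unfolding X_def using int by auto
    show "AE x in measure_pmf T. X x \<le> q * real (card S)"
      using tree by (auto simp: AE_measure_pmf_iff X_def)
  qed
  finally have A: "(\<Sum>i\<in>I. \<Sum>c\<in>S. accept_prob T (G c) - accept_prob T (F i c)) \<le> q * real (card S)" .
  have "(\<Sum>i\<in>I. \<Sum>c\<in>S. (1/3::real)) \<le> (\<Sum>i\<in>I. \<Sum>c\<in>S. accept_prob T (G c) - accept_prob T (F i c))"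
    by (intro sum_mono) (use yes no in force)
  then have "real (card I) * real (card S) / 3 \<le> q * real (card S)" using A by simp
  moreover have "card S > 0" using fS neS by (simp add: card_gt_0_iff)
  ultimately show ?thesis by (simp add: field_simps)
qed

primrec qpath :: "dtree \<Rightarrow> (nat \<Rightarrow> nat) \<Rightarrow> nat list" where
  "qpath (Leaf b) f = []"
| "qpath (Query x c) f = x # qpath (c (f x)) f"

lemma qpath_agree:
  "(\<forall>x\<in>set (qpath t f). f x = g x) \<Longrightarrow> run t f = run t g \<and> qpath t f = qpath t g"
  by (induction t) auto

lemma qpath_length:
  "queries_le R t q \<Longrightarrow> (\<forall>x. f x < R) \<Longrightarrow> length (qpath t f) \<le> q"
proof (induction t arbitrary: q)
  case (Leaf b) then show ?case by simp
next
  case (Query x c)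
  then have "q > 0" and "queries_le R (c (f x)) (q - 1)" by auto
  moreover have "length (qpath (c (f x)) f) \<le> q - 1"
    using Query.IH[OF rangeI, of "f x" "q - 1"] Query.prems \<open>queries_le R (c (f x)) (q - 1)\<close> by blast
  ultimately show ?case by auto
qed

definition Hlev :: "nat \<Rightarrow> nat set \<Rightarrow> bool" where
  "Hlev i Q \<longleftrightarrow> (\<exists>a\<in>Q. \<exists>b\<in>Q. a div 3^(i+1) = b div 3^(i+1) \<and> a div 3^i \<noteq> b div 3^i)"

lemma div_pow_mono_eq:
  fixes a b :: nat
  assumes "a div 3^i = b div 3^i" "i \<le> j"
  shows "a div 3^j = b div 3^j"
proof -
  have "3^j = (3::nat)^i * 3^(j-i)" using assms(2) by (simp add: power_add[symmetric])
  then show ?thesis using assms(1) by (simp add: div_mult2_eq)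
qed

lemma div_sandwich:
  fixes a b c m :: nat
  assumes "a \<le> b" "b \<le> c" "a div m = c div m"
  shows "b div m = c div m"
  using assms by (metis div_le_mono le_antisym)

lemma Hlev_card:
  assumes "finite Q" "finite I"
  shows "card {i\<in>I. Hlev i Q} \<le> card Q"
  using assms(1)
proof (induction "card Q" arbitrary: Q)
  case 0
  then have "Q = {}" by simp
  then show ?case by (simp add: Hlev_def)
next
  case (Suc n)
  then have ne: "Q \<noteq> {}" by auto
  define x where "x = Max Q"
  have xQ: "x \<in> Q" using Suc.prems ne by (simp add: x_def)
  have xmax: "\<And>y. y \<in> Q \<Longrightarrow> y \<le> x" using Suc.prems by (simp add: x_def)
  define Q' where "Q' = Q - {x}"
  have cQ': "card Q' = n" using Suc.hyps(2) xQ Suc.prems by (simp add: Q'_def)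
  have IH: "card {i\<in>I. Hlev i Q'} \<le> card Q'"
    using Suc.hyps(1)[of Q'] cQ' Suc.prems by (simp add: Q'_def)
  show ?case
  proof (cases "Q' = {}")
    case True
    then have "Q = {x}" using xQ by (auto simp: Q'_def)
    then have "{i\<in>I. Hlev i Q} = {}" by (auto simp: Hlev_def)
    then show ?thesis by (metis card.empty le0)
  next
    case False
    define y where "y = Max Q'"
    have fQ': "finite Q'" using Suc.prems by (simp add: Q'_def)
    have yQ': "y \<in> Q'" using False fQ' unfolding y_def by (rule Max_in[rotated])
    have ymax: "\<And>z. z \<in> Q' \<Longrightarrow> z \<le> y" using Suc.prems by (simp add: y_def Q'_def)
    have yx: "y \<le> x" using yQ' xmax by (auto simp: Q'_def)
    define P where "P = {i\<in>I. y div 3^(i+1) = x div 3^(i+1) \<and> y div 3^i \<noteq> x div 3^i}"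
    have cP: "card P \<le> 1"
    proof -
      have "\<forall>a1\<in>P. \<forall>a2\<in>P. a1 = a2"
      proof (intro ballI, rule ccontr)
        fix a1 a2 assume a: "a1 \<in> P" "a2 \<in> P" "a1 \<noteq> a2"
        show False
        proof (cases "a1 < a2")
          case True
          then have "y div 3^a2 = x div 3^a2"
            using a div_pow_mono_eq[of y "a1+1" x a2] by (auto simp: P_def)
          then show False using a by (auto simp: P_def)
        next
          case False
          then have "a2 < a1" using a by auto
          then have "y div 3^a1 = x div 3^a1"
            using a div_pow_mono_eq[of y "a2+1" x a1] by (auto simp: P_def)
          then show False using a by (auto simp: P_def)
        qed
      qed
      moreover have "finite P" using assms(2) by (simp add: P_def)
      ultimately show ?thesis using card_le_Suc0_iff_eq by auto
    qed
    have sub: "{i\<in>I. Hlev i Q} \<subseteq> {i\<in>I. Hlev i Q'} \<union> P"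
    proof
      fix i assume "i \<in> {i\<in>I. Hlev i Q}"
      then obtain a b where ab: "i \<in> I" "a \<in> Q" "b \<in> Q" "a div 3^(i+1) = b div 3^(i+1)" "a div 3^i \<noteq> b div 3^i"
        by (auto simp: Hlev_def)
      have key: "i \<in> {i\<in>I. Hlev i Q'} \<union> P" if "u \<in> Q'" "u div 3^(i+1) = x div 3^(i+1)" "u div 3^i \<noteq> x div 3^i" for u
      proof -
        have "u \<le> y" using ymax that by auto
        then have e1: "y div 3^(i+1) = x div 3^(i+1)" using div_sandwich[of u y x] that yx by auto
        show ?thesis
        proof (cases "y div 3^i = x div 3^i")
          case True
          then have "Hlev i Q'" unfolding Hlev_def using that yQ' e1
            by (intro bexI[of _ u] bexI[of _ y]) auto
          then show ?thesis using ab by auto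
        next
          case False
          then show ?thesis using e1 ab by (auto simp: P_def)
        qed
      qed
      show "i \<in> {i\<in>I. Hlev i Q'} \<union> P"
      proof (cases "a = x")
        case True
        then have "b \<noteq> x" using ab by auto
        then have "b \<in> Q'" using ab by (auto simp: Q'_def)
        then show ?thesis using key[of b] ab True by auto
      next
        case aF: False
        show ?thesis
        proof (cases "b = x")
          case True
          then have "a \<in> Q'" using ab aF by (auto simp: Q'_def)
          then show ?thesis using key[of a] ab True by auto
        next
          case False
          then have "Hlev i Q'" using ab aF unfolding Hlev_def Q'_def by blast
          then show ?thesis using ab by auto
        qed
      qed
    qed
    have "card {i\<in>I. Hlev i Q} \<le> card ({i\<in>I. Hlev i Q'} \<union> P)"
      by (rule card_mono) (use sub assms(2) P_def in auto)
    also have "\<dots> \<le> card {i\<in>I. Hlev i Q'} + card P" by (rule card_Un_le)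
    also have "\<dots> \<le> n + 1" using IH cQ' cP by simp
    finally show ?thesis using Suc.hyps(2) by simp
  qed
qed

lemma coupling_count:
  fixes G F :: "'s \<Rightarrow> nat \<Rightarrow> nat" and flip :: "nat list \<Rightarrow> 's \<Rightarrow> 's"
  assumes fS: "finite S"
    and flipS: "\<And>P c. c \<in> S \<Longrightarrow> flip P c \<in> S"
    and flipinj: "\<And>P c c'. flip P c = flip P c' \<Longrightarrow> c = c'"
    and agree: "\<And>c. c \<in> S \<Longrightarrow> \<not> Hs (qpath t (G c)) \<Longrightarrow>
                  \<forall>x\<in>set (qpath t (G c)). F (flip (qpath t (G c)) c) x = G c x"
  shows "card {c\<in>S. run t (G c)} \<le> card {c\<in>S. run t (F c)} + card {c\<in>S. Hs (qpath t (G c))}"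
proof -
  define A where "A = {c\<in>S. \<not> Hs (qpath t (G c)) \<and> run t (G c)}"
  define psi where "psi = (\<lambda>c. flip (qpath t (G c)) c)"
  have pa: "run t (F (psi c)) = run t (G c) \<and> qpath t (F (psi c)) = qpath t (G c)" if "c \<in> A" for c
  proof -
    have "\<forall>x\<in>set (qpath t (G c)). G c x = F (psi c) x"
      using agree[of c] that by (auto simp: A_def psi_def)
    from qpath_agree[OF this] show ?thesis by simp
  qed
  have "inj_on psi A"
  proof
    fix c c' assume cc: "c \<in> A" "c' \<in> A" "psi c = psi c'"
    then have "qpath t (G c) = qpath t (G c')" using pa[of c] pa[of c'] by metis
    then show "c = c'" using cc flipinj unfolding psi_def by metis
  qed
  moreover have "psi ` A \<subseteq> {c\<in>S. run t (F c)}"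
    using pa flipS by (auto simp: A_def psi_def)
  ultimately have "card A \<le> card {c\<in>S. run t (F c)}"
    using card_inj_on_le[of psi A "{c\<in>S. run t (F c)}"] fS by simp
  moreover have "{c\<in>S. run t (G c)} \<subseteq> A \<union> {c\<in>S. Hs (qpath t (G c))}" by (auto simp: A_def)
  then have "card {c\<in>S. run t (G c)} \<le> card (A \<union> {c\<in>S. Hs (qpath t (G c))})"
    by (rule card_mono[rotated]) (use fS A_def in simp)
  moreover have "card (A \<union> {c\<in>S. Hs (qpath t (G c))}) \<le> card A + card {c\<in>S. Hs (qpath t (G c))}"
    by (rule card_Un_le)
  ultimately show ?thesis by linarith
qed

definition S1 :: "nat \<Rightarrow> nat \<Rightarrow> int" where
  "S1 j p = (if p < 3^j then -2 * int p else int p - 3 * int (3^j))"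
definition Yb :: "bool \<Rightarrow> nat \<Rightarrow> nat \<Rightarrow> int" where
  "Yb b j p = (if b then S1 j p else 0)"
definition bet :: "nat \<Rightarrow> nat \<Rightarrow> int" where
  "bet j x = (\<Sum>y<x. int (y div 3^(j+1)))"

lemma S1g_conv:
  fixes L p :: nat
  shows "(if p < L then -2 * int p else int p - 3 * int L) + (if p+2 < L then -2 * int (p+2) else int (p+2) - 3 * int L)
     - 2 * (if p+1 < L then -2 * int (p+1) else int (p+1) - 3 * int L) \<ge> 0"
  by (cases "p+2 < L"; cases "p+1 < L"; cases "p < L") auto

lemma S1_conv: "S1 j p + S1 j (p+2) - 2 * S1 j (p+1) \<ge> 0"
  unfolding S1_def using S1g_conv[of p "3^j"] by simp

lemma pow3_ge3: "j \<ge> 1 \<Longrightarrow> (3::nat) \<le> 3^j"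
  using power_increasing[of 1 j "3::nat"] by simp

lemma Yb_conv: "Yb b j p + Yb b j (p+2) - 2 * Yb b j (p+1) \<ge> 0"
  unfolding Yb_def using S1_conv by auto

lemma S1_0: "S1 j 0 = 0" by (simp add: S1_def)
lemma S1_1: "j \<ge> 1 \<Longrightarrow> S1 j 1 = -2"
proof -
  assume "j \<ge> 1" then have "(1::nat) < 3^j" using pow3_ge3 by fastforce
  then show ?thesis by (simp add: S1_def)
qed
lemma S1_last: "S1 j (3^(j+1) - 1) = -1"
proof -
  have "(3::nat)^j \<ge> 1" by simp
  then have "\<not> (3^(j+1) - 1 < (3::nat)^j)" by simp
  moreover have "int (3^(j+1) - 1) = 3 * int (3^j) - 1" by (simp add: of_nat_diff)
  ultimately show ?thesis by (simp add: S1_def)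
qed
lemma S1_last2: "j \<ge> 1 \<Longrightarrow> S1 j (3^(j+1) - 2) = -2"
proof -
  assume j: "j \<ge> 1"
  have "(3::nat)^j \<ge> 3" using j by (rule pow3_ge3)
  then have "\<not> (3^(j+1) - 2 < (3::nat)^j)" by simp
  moreover have "int (3^(j+1) - 2) = 3 * int (3^j) - 2" using \<open>(3::nat)^j \<ge> 3\<close> by (simp add: of_nat_diff)
  ultimately show ?thesis by (simp add: S1_def)
qed

lemma Yb_0: "Yb b j 0 = 0" by (simp add: Yb_def S1_0)
lemma Yb_1: "j \<ge> 1 \<Longrightarrow> Yb b j 1 \<ge> -2" using S1_1[of j] by (simp add: Yb_def)
lemma Yb_last: "Yb b j (3^(j+1) - 1) \<ge> -1" using S1_last[of j] by (simp add: Yb_def)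

lemma bet_Suc: "bet j (Suc x) = bet j x + int (x div 3^(j+1))"
  by (simp add: bet_def)

lemma divmod_split:
  fixes M q r :: nat
  assumes "0 < M"
  shows "(M*q + r) div M = q + r div M" "(M*q + r) mod M = r mod M"
  using assms by (simp_all add: add.commute)

lemma Y_conv:
  fixes B :: "nat \<Rightarrow> bool"
  assumes j: "j \<ge> 1"
  defines "M \<equiv> (3::nat)^(j+1)"
  shows "Yb (B (w div M)) j (w mod M) + Yb (B ((w+2) div M)) j ((w+2) mod M)
         - 2 * Yb (B ((w+1) div M)) j ((w+1) mod M)
         + 3 * (int ((w+1) div M) - int (w div M)) \<ge> 0"
proof -
  have M9: "M \<ge> 9" unfolding M_def using pow3_ge3[OF j] by simp
  define q where "q = w div M"
  define p where "p = w mod M"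
  have w: "w = M*q + p" by (simp add: q_def p_def)
  have pM: "p < M" using M9 by (simp add: p_def)
  consider "p + 1 = M" | "p + 2 = M" | "p + 2 < M" using pM by linarith
  then show ?thesis
  proof cases
    case 1
    have e0: "w div M = q" "w mod M = M - 1" using 1 by (auto simp: q_def p_def)
    have e1: "(w+1) div M = q + 1" "(w+1) mod M = 0"
      using divmod_split[of M q "p+1"] 1 M9 w by (auto simp: add.assoc)
    have "w + 2 = M*(q+1) + 1" using w 1 by (simp add: algebra_simps)
    then have e2: "(w+2) div M = q + 1" "(w+2) mod M = 1"
      using divmod_split[of M "q+1" 1] M9 by auto
    have "Yb (B q) j (M - 1) \<ge> -1" "Yb (B (q+1)) j 1 \<ge> -2"
      using Yb_1[OF j] Yb_last[of _ j] unfolding M_def by auto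
    then show ?thesis unfolding e0 e1 e2 by (simp add: Yb_0)
  next
    case 2
    have e0: "w div M = q" "w mod M = M - 2" using 2 by (auto simp: q_def p_def)
    have e1: "(w+1) div M = q" "(w+1) mod M = M - 1"
      using divmod_split[of M q "p+1"] 2 M9 w by (auto simp: add.assoc)
    have e2: "(w+2) div M = q + 1" "(w+2) mod M = 0"
      using divmod_split[of M q "p+2"] 2 M9 w by (auto simp: add.assoc)
    show ?thesis unfolding e0 e1 e2 using S1_last[of j] S1_last2[OF j] M_def
      by (simp add: Yb_def S1_0)
  next
    case 3
    have e0: "w div M = q" "w mod M = p" by (auto simp: q_def p_def)
    have e1: "(w+1) div M = q" "(w+1) mod M = p + 1"
      using divmod_split[of M q "p+1"] 3 M9 w by (auto simp: add.assoc)
    have e2: "(w+2) div M = q" "(w+2) mod M = p + 2"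
      using divmod_split[of M q "p+2"] 3 M9 w by (auto simp: add.assoc)
    show ?thesis unfolding e0 e1 e2 using Yb_conv[of "B q" j p] by simp
  qed
qed

lemma convex_from_D2:
  fixes h :: "nat \<Rightarrow> real"
  assumes D2: "\<And>w. w + 2 < n \<Longrightarrow> 2 * h (w+1) \<le> h w + h (w+2)"
  shows "convex_fin {..<n} h"
proof -
  define \<Delta> where "\<Delta> = (\<lambda>y. h (y+1) - h y)"
  have mono1: "\<Delta> y \<le> \<Delta> (y+1)" if "y + 2 < n" for y
    using D2[OF that] by (simp add: \<Delta>_def)
  have mono: "\<Delta> y \<le> \<Delta> y'" if "y \<le> y'" "y' + 1 < n" for y y'
    using that
  proof (induction y' rule: dec_induct)
    case base then show ?case by simp
  next
    case (step z)
    then have "\<Delta> y \<le> \<Delta> z" by simp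
    also have "\<Delta> z \<le> \<Delta> (z+1)" using step mono1[of z] by simp
    finally show ?case by simp
  qed
  have tele: "h b - h a = (\<Sum>y\<in>{a..<b}. \<Delta> y)" if "a \<le> b" for a b
    using sum_Suc_diff'[OF that, of h] by (simp add: \<Delta>_def)
  show ?thesis unfolding convex_fin_def
  proof (intro allI impI)
    fix S :: "nat set" and lam :: "nat \<Rightarrow> real" and m
    assume H: "finite S \<and> S \<subseteq> {..<n} \<and> (\<forall>x\<in>S. 0 \<le> lam x) \<and> sum lam S = 1 \<and>
               m \<in> {..<n} \<and> (\<Sum>x\<in>S. lam x * real x) = real m"
    then have mn: "m < n" by simp
    define s where "s = (if m + 1 < n then \<Delta> m else if m \<ge> 1 then \<Delta> (m-1) else 0)"
    have supp: "h m + s * (real x - real m) \<le> h x" if "x < n" for x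
    proof (cases "m \<le> x")
      case True
      show ?thesis
      proof (cases "x = m")
        case True then show ?thesis by simp
      next
        case False
        then have mx: "m < x" using True by simp
        then have m1: "m + 1 < n" using that by simp
        then have sd: "s = \<Delta> m" by (simp add: s_def)
        have "(\<Sum>y\<in>{m..<x}. \<Delta> m) \<le> (\<Sum>y\<in>{m..<x}. \<Delta> y)"
          by (rule sum_mono) (use mono that in auto)
        then have "real (x - m) * \<Delta> m \<le> h x - h m" using tele[of m x] True by simp
        then show ?thesis using sd mx by (simp add: of_nat_diff algebra_simps)
      qed
    next
      case False
      then have xm: "x < m" by simp
      then have m1: "m \<ge> 1" by simp
      have sd: "\<Delta> (m-1) \<le> s"
      proof (cases "m + 1 < n")
        case True then show ?thesis using mono[of "m-1" m] by (simp add: s_def)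
      next
        case False then show ?thesis using m1 by (simp add: s_def)
      qed
      have "(\<Sum>y\<in>{x..<m}. \<Delta> y) \<le> (\<Sum>y\<in>{x..<m}. \<Delta> (m-1))"
        by (rule sum_mono) (use mono mn in auto)
      then have "h m - h x \<le> real (m - x) * \<Delta> (m-1)" using tele[of x m] xm by simp
      also have "\<dots> \<le> real (m - x) * s" using sd by (intro mult_left_mono) auto
      finally show ?thesis using xm by (simp add: of_nat_diff algebra_simps)
    qed
    have "(\<Sum>x\<in>S. lam x * (h m + s * (real x - real m))) \<le> (\<Sum>x\<in>S. lam x * h x)"
      by (rule sum_mono) (use H supp in \<open>auto intro: mult_left_mono\<close>)
    moreover have "(\<Sum>x\<in>S. lam x * (h m + s * (real x - real m)))
        = h m * sum lam S + s * ((\<Sum>x\<in>S. lam x * real x) - real m * sum lam S)"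
      by (simp add: algebra_simps sum.distrib sum_distrib_left sum_subtractf)
    ultimately show "h m \<le> (\<Sum>x\<in>S. lam x * h x)" using H by simp
  qed
qed

lemma convex_triple:
  fixes h :: "nat \<Rightarrow> real"
  assumes "convex_fin D h" "l \<in> D" "m \<in> D" "r \<in> D" "l < m" "m < r"
  shows "real (r - l) * h m \<le> real (r - m) * h l + real (m - l) * h r"
proof -
  define lam where "lam = (\<lambda>x. if x = l then real (r - m) / real (r - l) else real (m - l) / real (r - l))"
  have lr: "l \<noteq> r" and pos: "real (r - l) > 0" using assms by auto
  have s1: "sum lam {l, r} = 1"
  proof -
    have "sum lam {l, r} = (real (r - m) + real (m - l)) / real (r - l)"
      using lr pos by (simp add: lam_def add_divide_distrib)
    also have "real (r - m) + real (m - l) = real (r - l)"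
      using assms(5,6) by (simp add: of_nat_diff algebra_simps)
    finally show ?thesis using pos by simp
  qed
  have s2: "(\<Sum>x\<in>{l,r}. lam x * real x) = real m"
  proof -
    have "(\<Sum>x\<in>{l,r}. lam x * real x) = (real (r - m) * real l + real (m - l) * real r) / real (r - l)"
      using lr pos by (simp add: lam_def add_divide_distrib)
    also have "real (r - m) * real l + real (m - l) * real r = real m * real (r - l)"
      using assms(5,6) by (simp add: of_nat_diff algebra_simps)
    finally show ?thesis using pos by simp
  qed
  have "h m \<le> (\<Sum>x\<in>{l,r}. lam x * h x)"
    using assms(1) unfolding convex_fin_def
    by (elim allE[of _ "{l,r}"] allE[of _ lam] allE[of _ m]) (use s1 s2 assms in \<open>auto simp: lam_def\<close>)
  also have "\<dots> = real (r - m) / real (r - l) * h l + real (m - l) / real (r - l) * h r"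
    using lr by (simp add: lam_def)
  finally have hm: "h m \<le> real (r - m) / real (r - l) * h l + real (m - l) / real (r - l) * h r" .
  have "real (r - l) * h m \<le> real (r - l) * (real (r - m) / real (r - l) * h l + real (m - l) / real (r - l) * h r)"
    using hm pos by (intro mult_left_mono) auto
  also have "\<dots> = real (r - m) * h l + real (m - l) * h r"
    using pos by (simp add: distrib_left)
  finally show ?thesis .
qed

definition bitf :: "(nat \<times> nat) set \<Rightarrow> nat \<Rightarrow> nat \<Rightarrow> nat \<Rightarrow> bool" where
  "bitf c i0 j x = (if j = i0 then ((j, x div 3^(j+1)) \<in> c) \<noteq> (3^j \<le> x mod 3^(j+1))
                    else (j, x div 3^(j+1)) \<in> c)"
definition levt :: "(nat \<times> nat) set \<Rightarrow> nat \<Rightarrow> nat \<Rightarrow> nat \<Rightarrow> int" where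
  "levt c i0 j x = 81^j * (Yb (bitf c i0 j x) j (x mod 3^(j+1)) + 3 * bet j x)"
definition Off :: "nat \<Rightarrow> int" where
  "Off k = (\<Sum>j\<in>{1..<k}. 2 * 81^j * 3^j)"
definition FF :: "nat \<Rightarrow> (nat \<times> nat) set \<Rightarrow> nat \<Rightarrow> nat \<Rightarrow> int" where
  "FF k c i0 x = Off k + (\<Sum>j\<in>{1..<k}. levt c i0 j x)"
definition fn :: "nat \<Rightarrow> (nat \<times> nat) set \<Rightarrow> nat \<Rightarrow> nat \<Rightarrow> nat" where
  "fn k c i0 x = (if x < 3^k then nat (FF k c i0 x) else 0)"

lemma bet_D2: "bet j w + bet j (w+2) - 2 * bet j (w+1) = int ((w+1) div 3^(j+1)) - int (w div 3^(j+1))"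
  using bet_Suc[of j w] bet_Suc[of j "w+1"] by simp

lemma levt_conv:
  assumes j: "j \<ge> 1"
  shows "2 * levt c 0 j (w+1) \<le> levt c 0 j w + levt c 0 j (w+2)"
proof -
  have bf: "bitf c 0 j x = ((j, x div 3^(j+1)) \<in> c)" for x using j by (simp add: bitf_def)
  have "0 \<le> Yb ((\<lambda>C. (j, C) \<in> c) (w div 3^(j+1))) j (w mod 3^(j+1))
         + Yb ((\<lambda>C. (j, C) \<in> c) ((w+2) div 3^(j+1))) j ((w+2) mod 3^(j+1))
         - 2 * Yb ((\<lambda>C. (j, C) \<in> c) ((w+1) div 3^(j+1))) j ((w+1) mod 3^(j+1))
         + 3 * (int ((w+1) div 3^(j+1)) - int (w div 3^(j+1)))"
    by (rule Y_conv[OF j])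
  then have "0 \<le> (Yb (bitf c 0 j w) j (w mod 3^(j+1)) + 3 * bet j w)
              + (Yb (bitf c 0 j (w+2)) j ((w+2) mod 3^(j+1)) + 3 * bet j (w+2))
              - 2 * (Yb (bitf c 0 j (w+1)) j ((w+1) mod 3^(j+1)) + 3 * bet j (w+1))"
    using bet_D2[of j w] unfolding bf by (simp add: algebra_simps)
  then have "0 \<le> (81::int)^j * ((Yb (bitf c 0 j w) j (w mod 3^(j+1)) + 3 * bet j w)
              + (Yb (bitf c 0 j (w+2)) j ((w+2) mod 3^(j+1)) + 3 * bet j (w+2))
              - 2 * (Yb (bitf c 0 j (w+1)) j ((w+1) mod 3^(j+1)) + 3 * bet j (w+1)))"
    by simp
  then show ?thesis unfolding levt_def by (simp add: algebra_simps)
qed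

lemma FF_conv: "2 * FF k c 0 (w+1) \<le> FF k c 0 w + FF k c 0 (w+2)"
proof -
  have "(\<Sum>j\<in>{1..<k}. 2 * levt c 0 j (w+1)) \<le> (\<Sum>j\<in>{1..<k}. levt c 0 j w + levt c 0 j (w+2))"
    by (rule sum_mono) (use levt_conv in auto)
  then show ?thesis unfolding FF_def by (simp add: sum.distrib sum_distrib_left)
qed

lemma Yb_lower: "p < 3^(j+1) \<Longrightarrow> Yb b j p \<ge> -2 * 3^j"
  by (auto simp: Yb_def S1_def)
lemma Yb_upper: "p < 3^(j+1) \<Longrightarrow> Yb b j p \<le> 0"
proof -
  assume p: "p < 3^(j+1)"
  then have "int p < int (3^(j+1))" by linarith
  then have "int p < 3 * int (3^j)" by simp
  then show ?thesis by (auto simp: Yb_def S1_def simp del: of_nat_power)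
qed

lemma bet_nonneg: "bet j x \<ge> 0" by (simp add: bet_def sum_nonneg)
lemma bet_upper: "bet j x \<le> int x * int x"
proof -
  have "bet j x \<le> (\<Sum>y<x. int x)" unfolding bet_def
    by (rule sum_mono) (meson div_le_dividend le_trans less_imp_le_nat of_nat_le_iff lessThan_iff)
  then show ?thesis by simp
qed

lemma geom81: "(\<Sum>j<k. (81::int)^j) * 80 = 81^k - 1"
  by (induction k) (auto simp: algebra_simps)

lemma levt_bounds:
  assumes "x < 3^k"
  shows "levt c i0 j x \<ge> - 2 * 81^j * 3^j" "levt c i0 j x \<le> 81^j * 3 * 9^k"
proof -
  have p: "x mod 3^(j+1) < 3^(j+1)" by simp
  have "bet j x \<le> int x * int x" by (rule bet_upper)
  also have "\<dots> \<le> 3^k * 3^k" using assms by (intro mult_mono) auto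
  also have "\<dots> = 9^k" by (simp add: power_mult_distrib[symmetric])
  finally have b: "bet j x \<le> 9^k" .
  have y1: "Yb (bitf c i0 j x) j (x mod 3^(j+1)) + 3 * bet j x \<ge> - 2 * 3^j"
    using Yb_lower[OF p, of "bitf c i0 j x"] bet_nonneg[of j x] by simp
  have "(81::int)^j * (- 2 * 3^j) \<le> 81^j * (Yb (bitf c i0 j x) j (x mod 3^(j+1)) + 3 * bet j x)"
    by (rule mult_left_mono[OF y1]) simp
  then show "levt c i0 j x \<ge> - 2 * 81^j * 3^j" unfolding levt_def by (simp add: algebra_simps)
  have y2: "Yb (bitf c i0 j x) j (x mod 3^(j+1)) + 3 * bet j x \<le> 3 * 9^k"
    using Yb_upper[OF p, of "bitf c i0 j x"] b by simp
  have "(81::int)^j * (Yb (bitf c i0 j x) j (x mod 3^(j+1)) + 3 * bet j x) \<le> 81^j * (3 * 9^k)"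
    by (rule mult_left_mono[OF y2]) simp
  then show "levt c i0 j x \<le> 81^j * 3 * 9^k" unfolding levt_def by (simp add: algebra_simps)
qed

lemma FF_nonneg: "x < 3^k \<Longrightarrow> FF k c i0 x \<ge> 0"
proof -
  assume x: "x < 3^k"
  have "(\<Sum>j\<in>{1..<k}. - 2 * 81^j * 3^j) \<le> (\<Sum>j\<in>{1..<k}. levt c i0 j x)"
    by (rule sum_mono) (use levt_bounds(1)[OF x] in auto)
  then show ?thesis unfolding FF_def Off_def by (simp add: sum_negf)
qed

lemma FF_upper: "x < 3^k \<Longrightarrow> FF k c i0 x < 729^k"
proof -
  assume x: "x < 3^k"
  have "(\<Sum>j\<in>{1..<k}. levt c i0 j x) \<le> (\<Sum>j\<in>{1..<k}. 81^j * 3 * 9^k)"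
    by (rule sum_mono) (use levt_bounds(2)[OF x] in auto)
  then have "FF k c i0 x \<le> (\<Sum>j\<in>{1..<k}. 2 * 81^j * 3^j + 81^j * 3 * 9^k)"
    unfolding FF_def Off_def by (simp add: sum.distrib)
  also have "\<dots> \<le> (\<Sum>j\<in>{1..<k}. 81^j * 5 * 9^k)"
  proof (rule sum_mono)
    fix j assume "j \<in> {1..<k}"
    then have "(3::int)^j \<le> 3^k" by (intro power_increasing) auto
    also have "(3::int)^k \<le> 9^k" by (intro power_mono) auto
    finally have a: "(3::int)^j \<le> 9^k" .
    have "(81::int)^j * (2 * 3^j) \<le> 81^j * (2 * 9^k)" using a by (intro mult_left_mono) auto
    then show "2 * 81^j * 3^j + 81^j * 3 * 9^k \<le> (81::int)^j * 5 * 9^k"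
      by (simp add: algebra_simps)
  qed
  also have "\<dots> \<le> (\<Sum>j<k. 81^j * 5 * 9^k)"
    by (rule sum_mono2) (auto simp: zero_le_mult_iff)
  also have "\<dots> = (\<Sum>j<k. (81::int)^j) * 5 * 9^k" by (simp add: sum_distrib_right)
  also have "\<dots> < 81^k * 9^k"
  proof -
    have "(\<Sum>j<k. (81::int)^j) \<ge> 0" by (simp add: sum_nonneg)
    then have "(\<Sum>j<k. (81::int)^j) * 5 < 81^k" using geom81[of k] by linarith
    then show ?thesis by (intro mult_strict_right_mono) auto
  qed
  also have "\<dots> = 729^k" by (simp add: power_mult_distrib[symmetric])
  finally show ?thesis .
qed

lemma R_bound: "k \<ge> 1 \<Longrightarrow> (729::nat)^k \<le> (9*k)^(3*k)"
proof -
  assume k: "k \<ge> 1"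
  have e: "(9*k)^(3*k) = ((9*k)^3)^k" by (rule power_mult)
  have "(729::nat) \<le> (9*k)^3"
  proof -
    have "(9::nat)^3 \<le> (9*k)^3" using k by (intro power_mono) auto
    then show ?thesis by simp
  qed
  then have "(729::nat)^k \<le> ((9*k)^3)^k" by (rule power_mono) simp
  then show ?thesis using e by simp
qed

lemma fn_class: "k \<ge> 1 \<Longrightarrow> fn k c i0 \<in> fun_class (3^k) ((9*k)^(3*k))"
proof -
  assume k: "k \<ge> 1"
  have "fn k c i0 x < (9*k)^(3*k)" for x
  proof (cases "x < 3^k")
    case True
    then have "FF k c i0 x < 729^k" by (rule FF_upper)
    then have "nat (FF k c i0 x) < 729^k" by (simp add: nat_less_iff)
    then have "nat (FF k c i0 x) < (9*k)^(3*k)" using R_bound[OF k] by (rule less_le_trans)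
    then show ?thesis using True by (simp only: fn_def if_True)
  next
    case False
    have "0 < (9*k)^(3*k)" using k by simp
    then show ?thesis using False by (simp add: fn_def)
  qed
  moreover have "\<forall>x\<ge>3^k. fn k c i0 x = 0" by (simp add: fn_def)
  ultimately show ?thesis unfolding fun_class_def by blast
qed

lemma fn_real: "x < 3^k \<Longrightarrow> real (fn k c i0 x) = real_of_int (FF k c i0 x)"
  using FF_nonneg[of x k c i0] by (simp add: fn_def)

lemma yes_convex: "convex_fin {..<3^k} (\<lambda>x. real (fn k c 0 x))"
proof (rule convex_from_D2)
  fix w :: nat assume w: "w + 2 < 3^k"
  have "real_of_int (2 * FF k c 0 (w+1)) \<le> real_of_int (FF k c 0 w + FF k c 0 (w+2))"
    using FF_conv by (simp only: of_int_le_iff)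
  then have "2 * real_of_int (FF k c 0 (w+1)) \<le> real_of_int (FF k c 0 w) + real_of_int (FF k c 0 (w+2))"
    by (simp only: of_int_add of_int_mult of_int_numeral)
  moreover have "real (fn k c 0 w) = real_of_int (FF k c 0 w)" using w by (intro fn_real) simp
  moreover have "real (fn k c 0 (w+1)) = real_of_int (FF k c 0 (w+1))" using w by (intro fn_real) simp
  moreover have "real (fn k c 0 (w+2)) = real_of_int (FF k c 0 (w+2))" using w by (intro fn_real) simp
  ultimately show "2 * real (fn k c 0 (w+1)) \<le> real (fn k c 0 w) + real (fn k c 0 (w+2))"
    by linarith
qed

definition gap :: "(nat \<Rightarrow> int) \<Rightarrow> nat \<Rightarrow> nat \<Rightarrow> nat \<Rightarrow> int" where
  "gap h l m r = int (r - l) * h m - int (r - m) * h l - int (m - l) * h r"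

lemma gap_affine:
  assumes "l \<le> m" "m \<le> r" "\<And>x. x \<in> {l, m, r} \<Longrightarrow> h x = A + B * int x"
  shows "gap h l m r = 0"
proof -
  have "gap h l m r = int (r - l) * (A + B * int m) - int (r - m) * (A + B * int l) - int (m - l) * (A + B * int r)"
    using assms(3) by (simp add: gap_def)
  also have "\<dots> = 0" using assms(1,2) by (simp add: of_nat_diff algebra_simps)
  finally show ?thesis .
qed

lemma gap_sum: "finite J \<Longrightarrow> gap (\<lambda>x. \<Sum>j\<in>J. f j x) l m r = (\<Sum>j\<in>J. gap (f j) l m r)"
  by (simp add: gap_def sum_distrib_left sum_subtractf)

lemma gap_plus_const: "l \<le> m \<Longrightarrow> m \<le> r \<Longrightarrow> gap (\<lambda>x. A + h x) l m r = gap h l m r"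
  by (simp add: gap_def of_nat_diff algebra_simps)

lemma gap_scale: "gap (\<lambda>x. A * h x) l m r = A * gap h l m r"
  by (simp add: gap_def algebra_simps)

lemma gap_add: "gap (\<lambda>x. h x + g x) l m r = gap h l m r + gap g l m r"
  by (simp add: gap_def algebra_simps)

lemma gap_slope:
  assumes lm: "l \<le> m" and mr: "m \<le> r"
    and sl: "\<And>y. l \<le> y \<Longrightarrow> y < r \<Longrightarrow> lo \<le> h (y+1) - h y \<and> h (y+1) - h y \<le> hi"
  shows "gap h l m r \<ge> - (hi - lo) * (int (m - l) * int (r - m))"
proof -
  have tele: "h b - h a = (\<Sum>y\<in>{a..<b}. h (Suc y) - h y)" if "a \<le> b" for a b
    using sum_Suc_diff'[OF that, of h] by simp
  have A: "h m - h l \<ge> int (m - l) * lo"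
  proof -
    have "(\<Sum>y\<in>{l..<m}. lo) \<le> (\<Sum>y\<in>{l..<m}. h (Suc y) - h y)"
      by (rule sum_mono) (use sl mr in auto)
    then show ?thesis using tele[OF lm] by simp
  qed
  have B: "h r - h m \<le> int (r - m) * hi"
  proof -
    have "(\<Sum>y\<in>{m..<r}. h (Suc y) - h y) \<le> (\<Sum>y\<in>{m..<r}. hi)"
      by (rule sum_mono) (use sl lm in auto)
    then show ?thesis using tele[OF mr] by simp
  qed
  have g: "gap h l m r = int (r - m) * (h m - h l) - int (m - l) * (h r - h m)"
    using lm mr by (simp add: gap_def of_nat_diff algebra_simps)
  have "int (r - m) * (int (m - l) * lo) \<le> int (r - m) * (h m - h l)"
    using A by (intro mult_left_mono) auto
  moreover have "int (m - l) * (h r - h m) \<le> int (m - l) * (int (r - m) * hi)"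
    using B by (intro mult_left_mono) auto
  ultimately have "gap h l m r \<ge> int (r - m) * (int (m - l) * lo) - int (m - l) * (int (r - m) * hi)"
    using g by linarith
  then show ?thesis by (simp add: algebra_simps)
qed

lemma div_cell:
  fixes y C :: nat
  assumes "y div 3^(i+1) = C" "i \<le> j"
  shows "y div 3^(j+1) = C div 3^(j-i)"
proof -
  have "(3::nat)^(j+1) = 3^(i+1) * 3^(j-i)" using assms(2) by (simp add: power_add[symmetric])
  then show ?thesis using assms(1) by (simp add: div_mult2_eq)
qed

lemma bet_affine:
  assumes "s \<le> x" "\<And>y. s \<le> y \<Longrightarrow> y < x \<Longrightarrow> y div 3^(j+1) = Q"
  shows "bet j x = bet j s + int (x - s) * int Q"
proof -
  have "bet j x = bet j s + (\<Sum>y\<in>{s..<x}. int (y div 3^(j+1)))"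
  proof -
    show ?thesis unfolding bet_def
      using sum.atLeastLessThan_concat[of 0 s x "\<lambda>y. int (y div 3^(j+1))"] assms(1)
      by (simp add: atLeast0LessThan)
  qed
  also have "(\<Sum>y\<in>{s..<x}. int (y div 3^(j+1))) = (\<Sum>y\<in>{s..<x}. int Q)"
    by (rule sum.cong) (use assms(2) in auto)
  finally show ?thesis by simp
qed

lemma bet_cell:
  assumes "x div 3^(i+1) = C" "i \<le> j"
  shows "bet j x = bet j (C * 3^(i+1)) + int (x - C * 3^(i+1)) * int (C div 3^(j-i))"
proof (rule bet_affine)
  show "C * 3^(i+1) \<le> x" using assms(1) by (metis div_times_less_eq_dividend)
  fix y assume y: "C * 3^(i+1) \<le> y" "y < x"
  have "y div 3^(i+1) = C"
  proof -
    have "C \<le> y div 3^(i+1)" using y(1) by (metis div_le_mono nonzero_mult_div_cancel_right power_not_zero zero_neq_numeral)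
    moreover have "y div 3^(i+1) \<le> C" using y(2) assms(1) by (metis div_le_mono less_imp_le_nat)
    ultimately show ?thesis by simp
  qed
  then show "y div 3^(j+1) = C div 3^(j-i)" using div_cell assms(2) by blast
qed

lemma cell_ge: "x div 3^(i+1) = C \<Longrightarrow> C * 3^(i+1) \<le> (x::nat)"
  by (metis div_times_less_eq_dividend)

lemma mod_lt_iff:
  fixes x :: nat
  shows "x mod 3^(j+1) < 3^j \<longleftrightarrow> (x div 3^j) mod 3 = 0"
proof -
  have e: "x mod 3^(j+1) = 3^j * (x div 3^j mod 3) + x mod 3^j"
    using mod_mult2_eq[of x "3^j" 3] by (simp add: mult.commute)
  have "x mod 3^j < 3^j" by simp
  show ?thesis
  proof
    assume "x mod 3^(j+1) < 3^j"
    then show "(x div 3^j) mod 3 = 0" using e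
      by (metis add_lessD1 less_one mult_less_cancel1 nat_mult_1_right not_less_iff_gr_or_eq)
  next
    assume "(x div 3^j) mod 3 = 0"
    then show "x mod 3^(j+1) < 3^j" using e by simp
  qed
qed

lemma levt_affine_hi:
  assumes ij: "i < j"
  shows "\<exists>A B. \<forall>x. x div 3^(i+1) = C \<longrightarrow> levt c i j x = A + B * int x"
proof -
  define M where "M = (3::nat)^(j+1)"
  define K where "K = M * (C div 3^(j-i))"
  define bb where "bb = ((j, C div 3^(j-i)) \<in> c)"
  define cond where "cond = ((C div 3^(j-1-i)) mod 3 = 0)"
  define s where "s = C * 3^(i+1)"
  define Q where "Q = C div 3^(j-i)"
  have cellfacts: "bitf c i j x = bb \<and> int (x mod M) = int x - int K \<and> (x mod M < 3^j \<longleftrightarrow> cond)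
      \<and> bet j x = bet j s + (int x - int s) * int Q"
    if x: "x div 3^(i+1) = C" for x
  proof -
    have d1: "x div M = C div 3^(j-i)" unfolding M_def using div_cell[OF x] ij by simp
    have b: "bitf c i j x = bb" using ij d1 by (simp add: bitf_def bb_def M_def)
    have "x = M * (x div M) + x mod M" by simp
    then have m: "int (x mod M) = int x - int K" unfolding K_def d1
      by (metis add_diff_cancel_left' of_nat_add)
    have d2: "x div 3^j = C div 3^(j-1-i)"
      using div_cell[OF x, of "j-1"] ij by simp
    have cnd: "x mod M < 3^j \<longleftrightarrow> cond" unfolding M_def cond_def using mod_lt_iff[of x j] d2 by simp
    have bt: "bet j x = bet j s + (int x - int s) * int Q"
      using bet_cell[OF x, of j] ij cell_ge[OF x] by (simp add: s_def Q_def of_nat_diff)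
    show ?thesis using b m cnd bt by simp
  qed
  obtain Ya Yc where Y: "\<And>x. x div 3^(i+1) = C \<Longrightarrow> Yb (bitf c i j x) j (x mod M) = Ya + Yc * int x"
  proof (cases "bb")
    case True
    show ?thesis
    proof (cases cond)
      case True
      show ?thesis
        by (rule that[of "2 * int K" "-2"]) (use cellfacts \<open>bb\<close> True in \<open>auto simp: Yb_def S1_def\<close>)
    next
      case False
      show ?thesis
        by (rule that[of "- int K - 3 * 3^j" 1]) (use cellfacts \<open>bb\<close> False in \<open>auto simp: Yb_def S1_def\<close>)
    qed
  next
    case False
    show ?thesis by (rule that[of 0 0]) (use cellfacts False in \<open>auto simp: Yb_def\<close>)
  qed
  show ?thesis
  proof (intro exI allI impI)
    fix x assume x: "x div 3^(i+1) = C"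
    have e1: "Yb (bitf c i j x) j (x mod 3^(j+1)) = Ya + Yc * int x" using Y[OF x] M_def by simp
    have e2: "bet j x = bet j s + (int x - int s) * int Q" using cellfacts[OF x] by simp
    have "levt c i j x = 81^j * ((Ya + Yc * int x) + 3 * (bet j s + (int x - int s) * int Q))"
      unfolding levt_def e1 e2 by simp
    then show "levt c i j x = 81^j * (Ya + 3 * (bet j s - int s * int Q)) + 81^j * (Yc + 3 * int Q) * int x"
      by (simp add: algebra_simps)
  qed
qed

lemma gap_levt_hi:
  assumes "i < j" "l \<le> m" "m \<le> r" "l div 3^(i+1) = C" "m div 3^(i+1) = C" "r div 3^(i+1) = C"
  shows "gap (levt c i j) l m r = 0"
proof -
  obtain A B where "\<forall>x. x div 3^(i+1) = C \<longrightarrow> levt c i j x = A + B * int x"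
    using levt_affine_hi[OF assms(1)] by blast
  then show ?thesis using assms by (intro gap_affine[where A=A and B=B]) auto
qed

lemma gap_levt_eq:
  assumes "l \<le> m" "m \<le> r" "l div 3^(i+1) = C" "m div 3^(i+1) = C" "r div 3^(i+1) = C"
  shows "gap (levt c i i) l m r = 81^i * gap (\<lambda>x. Yb (bitf c i i x) i (x mod 3^(i+1))) l m r"
proof -
  define s where "s = C * 3^(i+1)"
  have bt: "\<And>x. x \<in> {l,m,r} \<Longrightarrow> 3 * bet i x = 3 * (bet i s - int s * int C) + (3 * int C) * int x"
  proof -
    fix x assume "x \<in> {l,m,r}"
    then have x: "x div 3^(i+1) = C" using assms by auto
    have "bet i x = bet i s + int (x - s) * int C" using bet_cell[OF x, of i] by (simp add: s_def)
    moreover have "s \<le> x" using cell_ge[OF x] by (simp add: s_def)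
    ultimately show "3 * bet i x = 3 * (bet i s - int s * int C) + (3 * int C) * int x"
      by (simp add: of_nat_diff algebra_simps)
  qed
  have g0: "gap (\<lambda>x. 3 * bet i x) l m r = 0"
    by (rule gap_affine[OF assms(1,2)]) (rule bt)
  have "levt c i i = (\<lambda>x. 81^i * (Yb (bitf c i i x) i (x mod 3^(i+1)) + 3 * bet i x))"
    by (simp add: levt_def fun_eq_iff)
  then have "gap (levt c i i) l m r = 81^i * (gap (\<lambda>x. Yb (bitf c i i x) i (x mod 3^(i+1))) l m r + gap (\<lambda>x. 3 * bet i x) l m r)"
    by (simp add: gap_scale gap_add)
  then show ?thesis using g0 by simp
qed

lemma S1g_step:
  fixes p L :: nat
  shows "-2 \<le> (if p+1 < L then -2 * int (p+1) else int (p+1) - 3 * int L) - (if p < L then -2 * int p else int p - 3 * int L)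
    \<and> (if p+1 < L then -2 * int (p+1) else int (p+1) - 3 * int L) - (if p < L then -2 * int p else int p - 3 * int L) \<le> 1"
  by (cases "p+1 < L"; cases "p < L") auto

lemma dY_bounds:
  fixes B :: "nat \<Rightarrow> bool"
  assumes j: "j \<ge> 1"
  defines "M \<equiv> (3::nat)^(j+1)"
  shows "-2 \<le> Yb (B ((y+1) div M)) j ((y+1) mod M) - Yb (B (y div M)) j (y mod M)
       \<and> Yb (B ((y+1) div M)) j ((y+1) mod M) - Yb (B (y div M)) j (y mod M) \<le> 1"
proof -
  have M9: "M \<ge> 9" unfolding M_def using pow3_ge3[OF j] by simp
  define q where "q = y div M"
  define p where "p = y mod M"
  have w: "y = M*q + p" by (simp add: q_def p_def)
  have pM: "p < M" using M9 by (simp add: p_def)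
  consider "p + 1 = M" | "p + 1 < M" using pM by linarith
  then show ?thesis
  proof cases
    case 1
    have e0: "y div M = q" "y mod M = M - 1" using 1 by (auto simp: q_def p_def)
    have e1: "(y+1) div M = q + 1" "(y+1) mod M = 0"
      using divmod_split[of M q "p+1"] 1 M9 w by (auto simp: add.assoc)
    have "Yb (B q) j (M - 1) \<ge> -1" using Yb_last[of _ j] unfolding M_def by auto
    moreover have "Yb (B q) j (M - 1) \<le> 0" using Yb_upper[of "M-1" j] M9 unfolding M_def by simp
    ultimately show ?thesis unfolding e0 e1 by (simp add: Yb_0)
  next
    case 2
    have e0: "y div M = q" "y mod M = p" by (auto simp: q_def p_def)
    have e1: "(y+1) div M = q" "(y+1) mod M = p + 1"
      using divmod_split[of M q "p+1"] 2 M9 w by (auto simp: add.assoc)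
    have "-2 \<le> S1 j (p+1) - S1 j p \<and> S1 j (p+1) - S1 j p \<le> 1"
      unfolding S1_def using S1g_step[of p "3^j"] by simp
    then show ?thesis unfolding e0 e1 by (auto simp: Yb_def)
  qed
qed

lemma levt_slope:
  assumes j: "j \<ge> 1" "j \<noteq> i"
  shows "81^j * (-2 + 3 * int (y div 3^(j+1))) \<le> levt c i j (y+1) - levt c i j y
       \<and> levt c i j (y+1) - levt c i j y \<le> 81^j * (1 + 3 * int (y div 3^(j+1)))"
proof -
  have bf: "bitf c i j x = ((j, x div 3^(j+1)) \<in> c)" for x using j by (simp add: bitf_def)
  have d: "levt c i j (y+1) - levt c i j y = 81^j * ((Yb ((\<lambda>C. (j,C) \<in> c) ((y+1) div 3^(j+1))) j ((y+1) mod 3^(j+1))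
          - Yb ((\<lambda>C. (j,C) \<in> c) (y div 3^(j+1))) j (y mod 3^(j+1))) + 3 * int (y div 3^(j+1)))"
    unfolding levt_def bf using bet_Suc[of j y] by (simp add: algebra_simps)
  have b: "-2 \<le> Yb ((\<lambda>C. (j,C) \<in> c) ((y+1) div 3^(j+1))) j ((y+1) mod 3^(j+1))
          - Yb ((\<lambda>C. (j,C) \<in> c) (y div 3^(j+1))) j (y mod 3^(j+1))
       \<and> Yb ((\<lambda>C. (j,C) \<in> c) ((y+1) div 3^(j+1))) j ((y+1) mod 3^(j+1))
          - Yb ((\<lambda>C. (j,C) \<in> c) (y div 3^(j+1))) j (y mod 3^(j+1)) \<le> 1"
    by (rule dY_bounds[OF j(1)])
  show ?thesis unfolding d using b
    by (intro conjI mult_left_mono) auto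
qed

lemma gap_levt_lo:
  assumes j: "1 \<le> j" "j < i" and lm: "l \<le> m" and mr: "m \<le> r" and span: "r \<le> l + 3^i"
  shows "gap (levt c i j) l m r \<ge> - (81^j * (3 + 3^(i-j))) * (int (m - l) * int (r - m))"
proof -
  define M where "M = (3::nat)^(j+1)"
  define lo where "lo = (81::int)^j * (-2 + 3 * int (l div M))"
  define hi where "hi = (81::int)^j * (1 + 3 * int ((r - 1) div M))"
  have sl: "lo \<le> levt c i j (y+1) - levt c i j y \<and> levt c i j (y+1) - levt c i j y \<le> hi"
    if y: "l \<le> y" "y < r" for y
  proof -
    have a: "l div M \<le> y div M" using y by (simp add: div_le_mono)
    have b: "y div M \<le> (r - 1) div M" using y by (intro div_le_mono) auto
    have "lo \<le> 81^j * (-2 + 3 * int (y div M))" unfolding lo_def using a by (intro mult_left_mono) auto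
    moreover have "81^j * (1 + 3 * int (y div M)) \<le> hi" unfolding hi_def using b by (intro mult_left_mono) auto
    ultimately show ?thesis using levt_slope[where j=j and i=i and c=c and y=y] j unfolding M_def by auto
  qed
  have g: "gap (levt c i j) l m r \<ge> - (hi - lo) * (int (m - l) * int (r - m))"
    by (rule gap_slope[OF lm mr]) (use sl in auto)
  have pw: "(3::nat)^i = M * 3^(i-j-1)"
  proof -
    have "i = (j+1) + (i-j-1)" using j by simp
    then show ?thesis unfolding M_def by (metis power_add)
  qed
  have "(r - 1) div M \<le> (l + 3^i) div M" by (intro div_le_mono) (use span in auto)
  also have "(l + 3^i) div M = l div M + 3^(i-j-1)" unfolding pw
    using M_def by simp
  finally have "(r - 1) div M \<le> l div M + 3^(i-j-1)" .
  then have "int ((r - 1) div M) \<le> int (l div M) + int (3^(i-j-1))" by linarith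
  then have dd: "int ((r - 1) div M) - int (l div M) \<le> 3^(i-j-1)" by simp
  have "hi - lo = 81^j * (3 + 3 * (int ((r - 1) div M) - int (l div M)))"
    unfolding hi_def lo_def by (simp add: algebra_simps)
  also have "\<dots> \<le> 81^j * (3 + 3 * 3^(i-j-1))" using dd by (intro mult_left_mono) auto
  also have "(3::int) * 3^(i-j-1) = 3^(i-j)"
  proof -
    have "i - j = Suc (i-j-1)" using j by simp
    then have "(3::int)^(i-j) = 3^(Suc (i-j-1))" by (rule arg_cong)
    also have "\<dots> = 3 * 3^(i-j-1)" by (rule power_Suc)
    finally show ?thesis by simp
  qed
  finally have "hi - lo \<le> 81^j * (3 + 3^(i-j))" .
  then have "(hi - lo) * (int (m - l) * int (r - m)) \<le> 81^j * (3 + 3^(i-j)) * (int (m - l) * int (r - m))"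
    by (intro mult_right_mono) auto
  then have "- (81 ^ j * (3 + 3 ^ (i - j))) * (int (m - l) * int (r - m)) \<le> - (hi - lo) * (int (m - l) * int (r - m))"
    by (simp only: mult_minus_left)
  then show ?thesis using g by linarith
qed

lemma geom27: "(\<Sum>j<i. (27::int)^j) * 26 = 27^i - 1"
  by (induction i) (auto simp: algebra_simps)

lemma E_bound: "3 * (\<Sum>j\<in>{1..<i}. (81::int)^j * (3 + 3^(i-j))) \<le> 81^i"
proof -
  have "(\<Sum>j\<in>{1..<i}. (81::int)^j * (3 + 3^(i-j))) \<le> (\<Sum>j\<in>{1..<i}. 2 * 3^i * 27^j)"
  proof (rule sum_mono)
    fix j assume j: "j \<in> {1..<i}"
    have "(3::int) \<le> 3^(i-j)" using j by (intro pow3_ge3[where j="i-j", THEN of_nat_mono, simplified]) auto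
    then have a: "(3::int) + 3^(i-j) \<le> 2 * 3^(i-j)" by simp
    have b: "(81::int)^j * 3^(i-j) = 3^i * 27^j"
    proof -
      have "(81::int)^j = 27^j * 3^j" by (simp add: power_mult_distrib[symmetric])
      moreover have "(3::int)^j * 3^(i-j) = 3^i" using j by (simp add: power_add[symmetric])
      ultimately show ?thesis by (simp add: algebra_simps)
    qed
    have "(81::int)^j * (3 + 3^(i-j)) \<le> 81^j * (2 * 3^(i-j))" using a by (intro mult_left_mono) auto
    also have "(81::int)^j * (2 * 3^(i-j)) = 2 * ((81::int)^j * 3^(i-j))" by simp
    also have "\<dots> = 2 * 3^i * 27^j" using b by simp
    finally show "(81::int)^j * (3 + 3^(i-j)) \<le> 2 * 3^i * 27^j" .
  qed
  also have "\<dots> \<le> (\<Sum>j<i. 2 * 3^i * 27^j)" by (rule sum_mono2) auto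
  also have "\<dots> = 2 * 3^i * (\<Sum>j<i. (27::int)^j)" by (simp add: sum_distrib_left)
  finally have A: "(\<Sum>j\<in>{1..<i}. (81::int)^j * (3 + 3^(i-j))) \<le> 2 * 3^i * (\<Sum>j<i. (27::int)^j)" .
  have "(\<Sum>j<i. (27::int)^j) * 26 \<le> 27^i" using geom27[of i] by simp
  then have "6 * 3^i * ((\<Sum>j<i. (27::int)^j) * 26) \<le> 6 * 3^i * 27^i" by (intro mult_left_mono) auto
  then have "3 * (2 * 3^i * (\<Sum>j<i. (27::int)^j)) * 26 \<le> 6 * 81^i"
    by (simp add: power_mult_distrib[symmetric] algebra_simps)
  moreover have "0 \<le> 3^i * (\<Sum>j<i. (27::int)^j)" by (simp add: sum_nonneg)
  ultimately have "3 * (2 * 3^i * (\<Sum>j<i. (27::int)^j)) \<le> 81^i" by linarith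
  then show ?thesis using A by linarith
qed

lemma gap_FF:
  assumes i: "1 \<le> i" "i < k" and lm: "l < m" and mr: "m < r" and span: "r \<le> l + 3^i"
    and cl: "l div 3^(i+1) = C" and cm: "m div 3^(i+1) = C" and cr: "r div 3^(i+1) = C"
  shows "3 * gap (FF k c i) l m r \<ge> 81^i * (3 * gap (\<lambda>x. Yb (bitf c i i x) i (x mod 3^(i+1))) l m r - int (m - l) * int (r - m))"
proof -
  define P where "P = int (m - l) * int (r - m)"
  define gY where "gY = gap (\<lambda>x. Yb (bitf c i i x) i (x mod 3^(i+1))) l m r"
  define E where "E = (\<Sum>j\<in>{1..<i}. (81::int)^j * (3 + 3^(i-j)))"
  have P0: "P \<ge> 0" by (simp add: P_def)
  have "FF k c i = (\<lambda>x. Off k + (\<Sum>j\<in>{1..<k}. levt c i j x))" by (simp add: FF_def fun_eq_iff)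
  then have "gap (FF k c i) l m r = (\<Sum>j\<in>{1..<k}. gap (levt c i j) l m r)"
    using lm mr by (simp add: gap_plus_const gap_sum)
  also have "\<dots> = (\<Sum>j\<in>{1..<i}. gap (levt c i j) l m r) + (\<Sum>j\<in>{i..<k}. gap (levt c i j) l m r)"
    using sum.atLeastLessThan_concat[of 1 i k "\<lambda>j. gap (levt c i j) l m r"] i by simp
  also have "(\<Sum>j\<in>{i..<k}. gap (levt c i j) l m r) = gap (levt c i i) l m r + (\<Sum>j\<in>{Suc i..<k}. gap (levt c i j) l m r)"
    using i by (simp add: sum.atLeast_Suc_lessThan)
  also have "(\<Sum>j\<in>{Suc i..<k}. gap (levt c i j) l m r) = 0"
    by (rule sum.neutral) (use lm mr cl cm cr in \<open>auto intro!: gap_levt_hi[where C=C]\<close>)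
  also have "gap (levt c i i) l m r = 81^i * gY"
    unfolding gY_def by (rule gap_levt_eq[where C=C]) (use lm mr cl cm cr in auto)
  finally have e: "gap (FF k c i) l m r = (\<Sum>j\<in>{1..<i}. gap (levt c i j) l m r) + 81^i * gY" by simp
  have "(\<Sum>j\<in>{1..<i}. - ((81::int)^j * (3 + 3^(i-j))) * P) \<le> (\<Sum>j\<in>{1..<i}. gap (levt c i j) l m r)"
    by (rule sum_mono) (use gap_levt_lo lm mr span in \<open>auto simp: P_def\<close>)
  moreover have "(\<Sum>j\<in>{1..<i}. - ((81::int)^j * (3 + 3^(i-j))) * P) = - (E * P)"
    by (simp add: E_def sum_distrib_right sum_negf)
  ultimately have g: "gap (FF k c i) l m r \<ge> - (E * P) + 81^i * gY" using e by linarith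
  have "3 * E * P \<le> 81^i * P" using E_bound[of i] P0 unfolding E_def by (intro mult_right_mono) auto
  then show ?thesis using g unfolding P_def[symmetric] gY_def[symmetric] by (simp add: algebra_simps)
qed

definition pt :: "nat \<Rightarrow> nat \<Rightarrow> nat \<Rightarrow> nat \<Rightarrow> nat" where
  "pt i C a u = C * 3^(i+1) + a * 3^(i-1) + u"

lemma pow_T:
  assumes "1 \<le> i"
  shows "(3::nat)^i = 3 * 3^(i-1)" "(3::nat)^(i+1) = 9 * 3^(i-1)"
proof -
  have "i = Suc (i-1)" using assms by simp
  then show "(3::nat)^i = 3 * 3^(i-1)" by (metis power_Suc)
  then show "(3::nat)^(i+1) = 9 * 3^(i-1)" by simp
qed

lemma pt_facts:
  assumes i: "1 \<le> i" and u: "u < 3^(i-1)" and a: "a \<le> 8"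
  shows "pt i C a u div 3^(i+1) = C" "pt i C a u mod 3^(i+1) = a * 3^(i-1) + u"
        "pt i C a u mod 3^(i-1) = u"
proof -
  define T where "T = (3::nat)^(i-1)"
  have T0: "T > 0" by (simp add: T_def)
  have lt: "a * T + u < 9 * T"
  proof -
    have "a * T \<le> 8 * T" using a by simp
    then show ?thesis using u T_def by linarith
  qed
  have e: "pt i C a u = (9*T) * C + (a * T + u)" unfolding pt_def T_def using pow_T[OF i] by simp
  show "pt i C a u div 3^(i+1) = C" "pt i C a u mod 3^(i+1) = a * 3^(i-1) + u"
    unfolding e using pow_T[OF i] lt T0 by (simp_all add: T_def)
  have e2: "pt i C a u = T * (9 * C + a) + u" unfolding e by (simp add: algebra_simps)
  show "pt i C a u mod 3^(i-1) = u" unfolding e2 using u by (simp add: T_def)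
qed

lemma gY_val:
  assumes i: "1 \<le> i" and u: "u < 3^(i-1)" and a: "a \<le> 8"
  shows "Yb (bitf c i i (pt i C a u)) i (pt i C a u mod 3^(i+1)) =
     (if ((i, C) \<in> c) \<noteq> (3 \<le> a) then
        (if a < 3 then -2 * int (a * 3^(i-1) + u) else int (a * 3^(i-1) + u) - 9 * 3^(i-1)) else 0)"
proof -
  define T where "T = (3::nat)^(i-1)"
  have c3: "(3^i \<le> a * T + u) \<longleftrightarrow> 3 \<le> a"
  proof
    assume h: "3^i \<le> a * T + u"
    show "3 \<le> a"
    proof (rule ccontr)
      assume "\<not> 3 \<le> a" then have "a * T \<le> 2 * T" by simp
      then show False using h u pow_T(1)[OF i] T_def by linarith
    qed
  next
    assume "3 \<le> a" then have "3 * T \<le> a * T" by simp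
    then show "3^i \<le> a * T + u" using pow_T(1)[OF i] T_def by linarith
  qed
  have c4: "(a * T + u < 3^i) \<longleftrightarrow> a < 3" using c3 by linarith
  have i3: "int (3^i) = 3 * int T" using pow_T(1)[OF i] T_def by simp
  show ?thesis
    unfolding pt_facts[OF assms] bitf_def Yb_def S1_def
    using c3 c4 i3 by (simp add: T_def)
qed

lemma pt_diff: "a \<le> a' \<Longrightarrow> pt i C a' u - pt i C a u = (a' - a) * 3^(i-1)"
  unfolding pt_def by (simp add: diff_mult_distrib)

lemma pt_mono: "a < a' \<Longrightarrow> pt i C a u < pt i C a' u"
  unfolding pt_def by simp

lemma triple_pos:
  assumes i: "1 \<le> i" "i < k" and u: "u < 3^(i-1)"
    and a: "(al, am, ar) = (if (i, C) \<in> c then (2, 3, 4) else (0, 1, 3))"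
  shows "gap (FF k c i) (pt i C al u) (pt i C am u) (pt i C ar u) > 0"
proof -
  define T where "T = (3::nat)^(i-1)"
  have T1: "T \<ge> 1" by (simp add: T_def)
  have aa: "al < am" "am < ar" "ar \<le> 4" "ar - al \<le> 3" using a by (auto split: if_splits)
  define l where "l = pt i C al u"
  define m where "m = pt i C am u"
  define r where "r = pt i C ar u"
  have lm: "l < m" "m < r" using pt_mono aa by (auto simp: l_def m_def r_def)
  have dml: "m - l = (am - al) * T" "r - m = (ar - am) * T" "r - l = (ar - al) * T"
    using pt_diff aa by (auto simp: l_def m_def r_def T_def)
  have span: "r \<le> l + 3^i"
  proof -
    have "(ar - al) * T \<le> 3 * T" using aa by simp
    then show ?thesis using dml lm pow_T(1)[OF i(1)] T_def by linarith
  qed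
  have cells: "l div 3^(i+1) = C" "m div 3^(i+1) = C" "r div 3^(i+1) = C"
    using pt_facts(1)[OF i(1) u] aa by (auto simp: l_def m_def r_def)
  have main: "3 * gap (FF k c i) l m r \<ge> 81^i * (3 * gap (\<lambda>x. Yb (bitf c i i x) i (x mod 3^(i+1))) l m r - int (m - l) * int (r - m))"
    by (rule gap_FF[OF i lm span cells])
  have pos: "3 * gap (\<lambda>x. Yb (bitf c i i x) i (x mod 3^(i+1))) l m r - int (m - l) * int (r - m) > 0"
  proof (cases "(i, C) \<in> c")
    case True
    then have av: "al = 2" "am = 3" "ar = 4" using a by auto
    have yl: "Yb (bitf c i i l) i (l mod 3^(i+1)) = -2 * (2 * int T + int u)"
      using gY_val[OF i(1) u, of al c C] True av by (simp add: l_def T_def)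
    have ym: "Yb (bitf c i i m) i (m mod 3^(i+1)) = 0"
      using gY_val[OF i(1) u, of am c C] True av by (simp add: m_def)
    have yr: "Yb (bitf c i i r) i (r mod 3^(i+1)) = 0"
      using gY_val[OF i(1) u, of ar c C] True av by (simp add: r_def)
    have g: "gap (\<lambda>x. Yb (bitf c i i x) i (x mod 3^(i+1))) l m r = int T * (2 * (2 * int T + int u))"
      unfolding gap_def yl ym yr dml av by (simp add: algebra_simps)
    have p: "int (m - l) * int (r - m) = int T * int T" unfolding dml av by simp
    have f1: "int T * int T \<ge> 1" using T1 mult_mono[of 1 "int T" 1 "int T"] by simp
    have f2: "int T * int u \<ge> 0" by simp
    have "3 * (int T * (2 * (2 * int T + int u))) - int T * int T = 11 * (int T * int T) + 6 * (int T * int u)"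
      by (simp add: algebra_simps)
    then show ?thesis unfolding g p using f1 f2 by linarith
  next
    case False
    then have av: "al = 0" "am = 1" "ar = 3" using a by auto
    have yl: "Yb (bitf c i i l) i (l mod 3^(i+1)) = 0"
      using gY_val[OF i(1) u, of al c C] False av by (simp add: l_def)
    have ym: "Yb (bitf c i i m) i (m mod 3^(i+1)) = 0"
      using gY_val[OF i(1) u, of am c C] False av by (simp add: m_def)
    have yr: "Yb (bitf c i i r) i (r mod 3^(i+1)) = int u - 6 * int T"
      using gY_val[OF i(1) u, of ar c C] False av by (simp add: r_def T_def)
    have g: "gap (\<lambda>x. Yb (bitf c i i x) i (x mod 3^(i+1))) l m r = int T * (6 * int T - int u)"
      unfolding gap_def yl ym yr dml av by (simp add: algebra_simps)
    have p: "int (m - l) * int (r - m) = 2 * int T * int T" unfolding dml av by simp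
    have "int u < int T" using u T_def by simp
    then have f2: "int T * (int T - int u) > 0" using T1 by simp
    have f1: "int T * int T \<ge> 1" using T1 mult_mono[of 1 "int T" 1 "int T"] by simp
    have "3 * (int T * (6 * int T - int u)) - 2 * int T * int T = 13 * (int T * int T) + 3 * (int T * (int T - int u))"
      by (simp add: algebra_simps)
    then show ?thesis unfolding g p using f1 f2 by linarith
  qed
  have "0 < (81::int)^i * (3 * gap (\<lambda>x. Yb (bitf c i i x) i (x mod 3^(i+1))) l m r - int (m - l) * int (r - m))"
    using pos by simp
  then show ?thesis using main by (simp add: l_def m_def r_def)
qed

lemma pt_lt:
  assumes i: "1 \<le> i" "i < k" and C: "C < 3^(k-i-1)" and u: "u < 3^(i-1)" and a: "a \<le> 8"
  shows "pt i C a u < 3^k"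
proof -
  define T where "T = (3::nat)^(i-1)"
  have "pt i C a u = (9*T) * C + (a * T + u)" unfolding pt_def T_def using pow_T[OF i(1)] by simp
  also have "a * T + u < 9 * T"
  proof -
    have "a * T \<le> 8 * T" using a by simp
    then show ?thesis using u T_def by linarith
  qed
  then have "(9*T) * C + (a * T + u) < (9*T) * C + 9 * T" by simp
  also have "\<dots> = 9 * T * (C + 1)" by (simp add: algebra_simps)
  also have "\<dots> \<le> 9 * T * 3^(k-i-1)" using C by (intro mult_left_mono) auto
  also have "9 * T * 3^(k-i-1) = 3^(i+1) * 3^(k-i-1)" using pow_T[OF i(1)] T_def by simp
  also have "\<dots> = 3^k"
  proof -
    have "(i+1) + (k-i-1) = k" using i by simp
    then show ?thesis by (metis power_add)
  qed
  finally show ?thesis .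
qed

lemma no_far:
  assumes i: "1 \<le> i" "i < k"
  shows "far_from_convex (1/9) {..<3^k} (\<lambda>x. real (fn k c i x))"
  unfolding far_from_convex_def
proof (intro allI impI)
  fix h assume hc: "convex_fin {..<3^k} h"
  define T where "T = (3::nat)^(i-1)"
  define NC where "NC = (3::nat)^(k-i-1)"
  define al where "al = (\<lambda>C. if (i, C) \<in> c then 2 else (0::nat))"
  define am where "am = (\<lambda>C. if (i, C) \<in> c then 3 else (1::nat))"
  define ar where "ar = (\<lambda>C. if (i, C) \<in> c then 4 else (3::nat))"
  define D where "D = {x\<in>{..<3^k}. real (fn k c i x) \<noteq> h x}"
  define I where "I = {..<NC} \<times> {..<T}"
  define Tr where "Tr = (\<lambda>(C, u). {pt i C (al C) u, pt i C (am C) u, pt i C (ar C) u})"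
  have ex: "\<exists>x. x \<in> Tr Cu \<and> real (fn k c i x) \<noteq> h x" if Cu: "Cu \<in> I" for Cu
  proof (rule ccontr)
    assume nex: "\<not> (\<exists>x. x \<in> Tr Cu \<and> real (fn k c i x) \<noteq> h x)"
    obtain C u where Cu_eq: "Cu = (C, u)" by (cases Cu)
    have C: "C < NC" and u: "u < T" using Cu Cu_eq by (auto simp: I_def)
    define l where "l = pt i C (al C) u"
    define m where "m = pt i C (am C) u"
    define r where "r = pt i C (ar C) u"
    have trip: "(al C, am C, ar C) = (if (i, C) \<in> c then (2, 3, 4) else (0, 1, 3))"
      by (simp add: al_def am_def ar_def)
    have pos: "gap (FF k c i) l m r > 0"
      unfolding l_def m_def r_def using triple_pos[OF i u[unfolded T_def] trip] .
    have a8: "al C \<le> 8" "am C \<le> 8" "ar C \<le> 8" by (auto simp: al_def am_def ar_def)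
    have lt: "l < 3^k" "m < 3^k" "r < 3^k"
      using pt_lt[OF i C[unfolded NC_def] u[unfolded T_def]] a8 by (auto simp: l_def m_def r_def)
    have ord: "l < m" "m < r" using pt_mono by (auto simp: l_def m_def r_def al_def am_def ar_def)
    have agree: "h x = real_of_int (FF k c i x)" if "x \<in> {l, m, r}" for x
    proof -
      have "x \<in> Tr Cu" using that by (auto simp: Tr_def Cu_eq l_def m_def r_def)
      then have "h x = real (fn k c i x)" using nex by auto
      moreover have "x < 3^k" using that lt by auto
      ultimately show ?thesis using fn_real by simp
    qed
    have "real (r - l) * h m \<le> real (r - m) * h l + real (m - l) * h r"
      by (rule convex_triple[OF hc]) (use lt ord in auto)
    then have "real_of_int (gap (FF k c i) l m r) \<le> 0"
      unfolding gap_def using agree by simp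
    then show False using pos by simp
  qed
  define pick where "pick = (\<lambda>Cu. SOME x. x \<in> Tr Cu \<and> real (fn k c i x) \<noteq> h x)"
  have pk: "pick Cu \<in> Tr Cu \<and> real (fn k c i (pick Cu)) \<noteq> h (pick Cu)" if "Cu \<in> I" for Cu
    unfolding pick_def using someI_ex[OF ex[OF that]] .
  have pkform: "\<exists>a \<le> 8. pick (C, u) = pt i C a u" if "(C, u) \<in> I" for C u
  proof -
    have "pick (C, u) = pt i C (al C) u \<or> pick (C, u) = pt i C (am C) u \<or> pick (C, u) = pt i C (ar C) u"
      using pk[OF that] by (simp add: Tr_def)
    moreover have "al C \<le> 8" "am C \<le> 8" "ar C \<le> 8" by (auto simp: al_def am_def ar_def)
    ultimately show ?thesis by blast
  qed
  have pkD: "pick Cu \<in> D" if Cu_in: "Cu \<in> I" for Cu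
  proof -
    obtain C u where Cu_eq: "Cu = (C, u)" by (cases Cu)
    have CuI: "(C, u) \<in> I" using Cu_in Cu_eq by simp
    then have C: "C < NC" and u: "u < T" by (auto simp: I_def)
    from pkform[OF CuI] obtain a where a: "a \<le> 8" "pick (C, u) = pt i C a u" by blast
    have "pt i C a u < 3^k" by (rule pt_lt[OF i C[unfolded NC_def] u[unfolded T_def] a(1)])
    then have lt: "pick Cu < 3^k" using a(2) Cu_eq by simp
    have "real (fn k c i (pick Cu)) \<noteq> h (pick Cu)" using pk[OF Cu_in] by blast
    then show ?thesis using lt unfolding D_def by blast
  qed
  have inj: "inj_on pick I"
  proof
    fix x y assume x: "x \<in> I" and y: "y \<in> I" and e: "pick x = pick y"
    obtain C u where xe: "x = (C, u)" by (cases x)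
    obtain C' u' where ye: "y = (C', u')" by (cases y)
    have xI: "(C, u) \<in> I" using x xe by simp
    have yI: "(C', u') \<in> I" using y ye by simp
    have u: "u < T" "u' < T" using xI yI by (auto simp: I_def)
    from pkform[OF xI] obtain a where a: "a \<le> 8" "pick (C, u) = pt i C a u" by blast
    from pkform[OF yI] obtain a' where a': "a' \<le> 8" "pick (C', u') = pt i C' a' u'" by blast
    have ee: "pt i C a u = pt i C' a' u'" using e a(2) a'(2) xe ye by simp
    have f1: "pt i C a u div 3^(i+1) = C" "pt i C a u mod 3^(i-1) = u"
      using pt_facts(1,3)[OF i(1) u(1)[unfolded T_def] a(1), of C] by auto
    have f2: "pt i C' a' u' div 3^(i+1) = C'" "pt i C' a' u' mod 3^(i-1) = u'"
      using pt_facts(1,3)[OF i(1) u(2)[unfolded T_def] a'(1), of C'] by auto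
    have "C = C'" using f1(1) f2(1) ee by simp
    moreover have "u = u'" using f1(2) f2(2) ee by simp
    ultimately show "x = y" using xe ye by simp
  qed
  have "card I \<le> card D"
    by (rule card_inj_on_le[OF inj]) (use pkD in \<open>auto simp: D_def\<close>)
  moreover have "card I = 3^(k-2)"
  proof -
    have "card I = NC * T" by (simp add: I_def card_cartesian_product)
    also have "\<dots> = 3^((k-i-1) + (i-1))" unfolding NC_def T_def by (simp add: power_add)
    also have "(k-i-1) + (i-1) = k - 2" using i by simp
    finally show ?thesis .
  qed
  moreover have "(3::nat)^k = 9 * 3^(k-2)"
  proof -
    have "k = (k-2) + 2" using i by simp
    then have "(3::nat)^k = 3^(k-2) * 3^2" by (metis power_add)
    then show ?thesis by simp
  qed
  ultimately show "1/9 * real (card {..<(3::nat)^k}) \<le> real (card {x\<in>{..<3^k}. real (fn k c i x) \<noteq> h x})"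
    unfolding D_def by simp
qed

definition symd :: "'a set \<Rightarrow> 'a set \<Rightarrow> 'a set" where
  "symd A B = (A - B) \<union> (B - A)"

lemma symd_mem: "x \<in> symd A B \<longleftrightarrow> (x \<in> A) \<noteq> (x \<in> B)"
  by (auto simp: symd_def)

definition Flp :: "nat \<Rightarrow> nat \<Rightarrow> nat list \<Rightarrow> (nat \<times> nat) set" where
  "Flp k i P = {(i, x div 3^(i+1)) | x. x \<in> set P \<and> x < 3^k \<and> 3^i \<le> x mod 3^(i+1)}"

definition Hs :: "nat \<Rightarrow> nat \<Rightarrow> nat list \<Rightarrow> bool" where
  "Hs k i P = Hlev i (set P \<inter> {..<3^k})"

lemma mod_ge_iff: "(3^i \<le> (x::nat) mod 3^(i+1)) \<longleftrightarrow> (x div 3^i) mod 3 \<noteq> 0"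
  using mod_lt_iff[of x i] by linarith

lemma agree_flip:
  assumes i: "1 \<le> i" "i < k" and nh: "\<not> Hs k i P" and x: "x \<in> set P"
  shows "fn k (symd c (Flp k i P)) i x = fn k c 0 x"
proof (cases "x < 3^k")
  case False then show ?thesis by (simp add: fn_def)
next
  case True
  have fl: "((i, x div 3^(i+1)) \<in> Flp k i P) = (3^i \<le> x mod 3^(i+1))"
  proof
    assume "(i, x div 3^(i+1)) \<in> Flp k i P"
    then obtain y where y: "y \<in> set P" "y < 3^k" "3^i \<le> y mod 3^(i+1)" "y div 3^(i+1) = x div 3^(i+1)"
      unfolding Flp_def by auto
    have "y div 3^i = x div 3^i"
    proof (rule ccontr)
      assume "y div 3^i \<noteq> x div 3^i"
      then have "Hs k i P" unfolding Hs_def Hlev_def using y x True by blast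
      then show False using nh by simp
    qed
    then show "3^i \<le> x mod 3^(i+1)" using y(3) mod_ge_iff[of i x] mod_ge_iff[of i y] by simp
  next
    assume "3^i \<le> x mod 3^(i+1)"
    then show "(i, x div 3^(i+1)) \<in> Flp k i P" unfolding Flp_def using x True by blast
  qed
  have bits: "bitf (symd c (Flp k i P)) i j x = bitf c 0 j x" if j: "j \<in> {1..<k}" for j
  proof (cases "j = i")
    case True
    then show ?thesis using fl i by (auto simp: bitf_def symd_mem)
  next
    case False
    have "(j, x div 3^(j+1)) \<notin> Flp k i P" using False by (auto simp: Flp_def)
    then show ?thesis using False j by (auto simp: bitf_def symd_mem)
  qed
  have "FF k (symd c (Flp k i P)) i x = FF k c 0 x"
    unfolding FF_def levt_def using bits by (intro arg_cong[where f="\<lambda>s. Off k + s"] sum.cong) auto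
  then show ?thesis by (simp add: fn_def)
qed

lemma card_filter_sum: "finite S \<Longrightarrow> real (card {c\<in>S. P c}) = (\<Sum>c\<in>S. if P c then 1 else 0)"
  by (simp add: sum.If_cases Int_def)

lemma tree_bound:
  assumes k: "2 \<le> k" and tq: "queries_le ((9*k)^(3*k)) t q"
  defines "S \<equiv> Pow ({1..<k} \<times> {..<(3::nat)^k})"
  shows "(\<Sum>i\<in>{1..<k}. \<Sum>c\<in>S. (if run t (fn k c 0) then 1 else 0) - (if run t (fn k c i) then 1 else 0 :: real))
         \<le> real q * real (card S)"
proof -
  have fS: "finite S" by (simp add: S_def)
  have per_i: "card {c\<in>S. run t (fn k c 0)} \<le> card {c\<in>S. run t (fn k c i)} + card {c\<in>S. Hs k i (qpath t (fn k c 0))}"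
    if i: "i \<in> {1..<k}" for i
  proof (rule coupling_count[where flip="\<lambda>P c. symd c (Flp k i P)"])
    show "finite S" by (rule fS)
    show "symd c (Flp k i P) \<in> S" if "c \<in> S" for P c
    proof -
      have "Flp k i P \<subseteq> {1..<k} \<times> {..<3^k}"
        using i by (auto simp: Flp_def intro: le_less_trans[OF div_le_dividend])
      then show ?thesis using that by (auto simp: S_def symd_def)
    qed
    show "c = c'" if "symd c (Flp k i P) = symd c' (Flp k i P)" for P c c'
      using that unfolding symd_def by blast
    show "\<forall>x\<in>set (qpath t (fn k c 0)). fn k (symd c (Flp k i (qpath t (fn k c 0)))) i x = fn k c 0 x"
      if "c \<in> S" "\<not> Hs k i (qpath t (fn k c 0))" for c
      using agree_flip[of i k "qpath t (fn k c 0)" _ c] i that by auto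
  qed
  have lenq: "card {i\<in>{1..<k}. Hs k i (qpath t (fn k c 0))} \<le> q" for c
  proof -
    have "card {i\<in>{1..<k}. Hs k i (qpath t (fn k c 0))} \<le> card (set (qpath t (fn k c 0)) \<inter> {..<3^k})"
      unfolding Hs_def by (rule Hlev_card) auto
    also have "\<dots> \<le> card (set (qpath t (fn k c 0)))" by (rule card_mono) auto
    also have "\<dots> \<le> length (qpath t (fn k c 0))" by (rule card_length)
    also have "\<dots> \<le> q"
    proof (rule qpath_length[OF tq])
      have "fn k c 0 \<in> fun_class (3^k) ((9*k)^(3*k))" using k by (intro fn_class) auto
      moreover have "0 < (9*k)^(3*k)" using k by simp
      ultimately show "\<forall>x. fn k c 0 x < (9*k)^(3*k)"
      proof (intro allI)
        fix x
        assume A: "fn k c 0 \<in> fun_class (3^k) ((9*k)^(3*k))" and B: "0 < (9*k)^(3*k)"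
        show "fn k c 0 x < (9*k)^(3*k)"
        proof (cases "x < 3^k")
          case True then show ?thesis using A unfolding fun_class_def by blast
        next
          case False then have "fn k c 0 x = 0" using A unfolding fun_class_def by simp
          then show ?thesis using B by simp
        qed
      qed
    qed
    finally show ?thesis .
  qed
  have "(\<Sum>i\<in>{1..<k}. \<Sum>c\<in>S. (if run t (fn k c 0) then 1 else 0) - (if run t (fn k c i) then 1 else 0 :: real))
      = (\<Sum>i\<in>{1..<k}. real (card {c\<in>S. run t (fn k c 0)}) - real (card {c\<in>S. run t (fn k c i)}))"
    using fS by (simp add: sum_subtractf card_filter_sum)
  also have "\<dots> \<le> (\<Sum>i\<in>{1..<k}. real (card {c\<in>S. Hs k i (qpath t (fn k c 0))}))"
    by (rule sum_mono) (use per_i in force)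
  also have "\<dots> = (\<Sum>i\<in>{1..<k}. \<Sum>c\<in>S. if Hs k i (qpath t (fn k c 0)) then 1 else 0)"
    using fS by (simp add: card_filter_sum)
  also have "\<dots> = (\<Sum>c\<in>S. \<Sum>i\<in>{1..<k}. if Hs k i (qpath t (fn k c 0)) then 1 else 0)"
    by (rule sum.swap)
  also have "\<dots> = (\<Sum>c\<in>S. real (card {i\<in>{1..<k}. Hs k i (qpath t (fn k c 0))}))"
    by (intro sum.cong refl) (rule card_filter_sum[symmetric], simp)
  also have "\<dots> \<le> (\<Sum>c\<in>S. real q)"
    by (rule sum_mono) (use lenq in simp)
  also have "\<dots> = real q * real (card S)" by simp
  finally show ?thesis .
qed

lemma main_ge2:
  assumes k: "2 \<le> k" and tst: "convexity_tester (1/9) (3^k) ((9*k)^(3*k)) T"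
    and mk: "makes_at_most ((9*k)^(3*k)) T q"
  shows "real (k - 1) / 3 \<le> real q"
proof -
  define S where "S = Pow ({1..<k} \<times> {..<(3::nat)^k})"
  have "real (card {1..<k}) / 3 \<le> real q"
  proof (rule yao[where S=S and G="\<lambda>c. fn k c 0" and F="\<lambda>i c. fn k c i"])
    show "finite S" "S \<noteq> {}" "finite {1..<k}" by (auto simp: S_def)
    have tst': "\<And>f. f \<in> fun_class (3^k) ((9*k)^(3*k)) \<Longrightarrow>
        (convex_fin {..<3^k} (\<lambda>x. real (f x)) \<longrightarrow> accept_prob T f \<ge> 2/3) \<and>
        (far_from_convex (1/9) {..<3^k} (\<lambda>x. real (f x)) \<longrightarrow> 1 - accept_prob T f \<ge> 2/3)"
      using tst unfolding convexity_tester_def by blast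
    show "2/3 \<le> accept_prob T (fn k c 0)" if "c \<in> S" for c
    proof -
      have "fn k c 0 \<in> fun_class (3^k) ((9*k)^(3*k))" using k by (intro fn_class) auto
      from tst'[OF this] show ?thesis using yes_convex[of k c] by blast
    qed
    show "2/3 \<le> 1 - accept_prob T (fn k c i)" if "i \<in> {1..<k}" "c \<in> S" for i c
    proof -
      have "fn k c i \<in> fun_class (3^k) ((9*k)^(3*k))" using k by (intro fn_class) auto
      moreover have "far_from_convex (1/9) {..<3^k} (\<lambda>x. real (fn k c i x))"
        using that by (intro no_far) auto
      ultimately show ?thesis using tst' by blast
    qed
    show "(\<Sum>i\<in>{1..<k}. \<Sum>c\<in>S. (if run t (fn k c 0) then 1 else 0) - (if run t (fn k c i) then 1 else 0 :: real))
          \<le> real q * real (card S)" if "t \<in> set_pmf T" for t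
      using tree_bound[OF k, of t q] mk that unfolding makes_at_most_def S_def by auto
  qed
  then show ?thesis by simp
qed

lemma queries0: "queries_le R t 0 \<Longrightarrow> \<exists>b. t = Leaf b"
  by (cases t) auto

lemma q_pos:
  assumes tst: "convexity_tester (1/9) 3 729 T" and mk: "makes_at_most 729 T q"
  shows "q \<ge> 1"
proof (rule ccontr)
  assume "\<not> q \<ge> 1"
  then have q0: "q = 0" by simp
  have leaf: "\<exists>b. t = Leaf b" if "t \<in> set_pmf T" for t
    using mk that q0 unfolding makes_at_most_def by (auto intro: queries0)
  have same: "accept_prob T f = accept_prob T g" for f g
  proof -
    have "{t. run t f} \<inter> set_pmf T = {t. run t g} \<inter> set_pmf T"
      using leaf by fastforce
    then show ?thesis unfolding accept_prob_def by (metis measure_Int_set_pmf)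
  qed
  define f0 where "f0 = (\<lambda>x::nat. 0::nat)"
  define f1 where "f1 = (\<lambda>x::nat. if x = 1 then 1 else 0::nat)"
  have c0: "f0 \<in> fun_class 3 729" "f1 \<in> fun_class 3 729" by (auto simp: fun_class_def f0_def f1_def)
  have cv: "convex_fin {..<3} (\<lambda>x. real (f0 x))" unfolding convex_fin_def f0_def by simp
  have far: "far_from_convex (1/9) {..<3} (\<lambda>x. real (f1 x))"
    unfolding far_from_convex_def
  proof (intro allI impI)
    fix h assume hc: "convex_fin {..<3} h"
    have "{x\<in>{..<3::nat}. real (f1 x) \<noteq> h x} \<noteq> {}"
    proof
      assume e: "{x\<in>{..<3::nat}. real (f1 x) \<noteq> h x} = {}"
      then have A: "\<forall>x<3. real (f1 x) = h x" by blast
      have "h 0 = 0" using A[rule_format, of 0] by (simp add: f1_def)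
      moreover have "h 1 = 1" using A[rule_format, of 1] by (simp add: f1_def)
      moreover have "h 2 = 0" using A[rule_format, of 2] by (simp add: f1_def)
      moreover have "real (2 - 0) * h 1 \<le> real (2 - 1) * h 0 + real (1 - 0) * h 2"
        by (rule convex_triple[OF hc]) auto
      ultimately show False by simp
    qed
    then have "card {x\<in>{..<3::nat}. real (f1 x) \<noteq> h x} \<ge> 1"
      by (simp add: Suc_le_eq card_gt_0_iff)
    then show "1/9 * real (card {..<3::nat}) \<le> real (card {x\<in>{..<3::nat}. real (f1 x) \<noteq> h x})"
      by simp
  qed
  have a0: "accept_prob T f0 \<ge> 2/3" using tst c0 cv unfolding convexity_tester_def by blast
  have a1: "1 - accept_prob T f1 \<ge> 2/3" using tst c0 far unfolding convexity_tester_def by blast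
  show False using a0 a1 same[of f0 f1] by simp
qed

theorem theorem6p2:
  shows "\<exists>c>0. \<forall>k::nat. k \<ge> 1 \<longrightarrow>
           (\<forall>T q. convexity_tester (1/9) (3^k) ((9*k)^(3*k)) T \<and>
                  makes_at_most ((9*k)^(3*k)) T q \<longrightarrow> c * real k \<le> real q)"
proof (intro exI[of _ "1/6"] conjI allI impI)
  show "(0::real) < 1/6" by simp
  fix k :: nat and T q
  assume k: "k \<ge> 1"
    and H: "convexity_tester (1/9) (3^k) ((9*k)^(3*k)) T \<and> makes_at_most ((9*k)^(3*k)) T q"
  show "1/6 * real k \<le> real q"
  proof (cases "k = 1")
    case True
    have H1: "convexity_tester (1/9) 3 729 T" "makes_at_most 729 T q" using H True by simp_all
    have "q \<ge> 1" by (rule q_pos[OF H1])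
    then show ?thesis using True by simp
  next
    case False
    then have k2: "k \<ge> 2" using k by simp
    have "real (k - 1) / 3 \<le> real q" using main_ge2[OF k2] H by blast
    moreover have "real (k - 1) = real k - 1" using k by (simp add: of_nat_diff)
    ultimately show ?thesis using k2 by simp
  qed
qed

end
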